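(* Let $G$ be a connected graph on $n\ge 2$ vertices with Wiener index $W(G)$. Then $\gamma(G)\le \dfrac{n^2}{2W(G)}$, with equality if and only if $G$ is transmission-regular.
   Context: For a finite simple undirected graph $G$ with $n$ vertices, let $\mathcal{F}=\{x\in\mathbb{R}^{V(G)} : \sum_{v} x_v = 0,\ \|x\|_\infty = 1\}$, for $x\in\mathcal{F}$ let $\gamma_x(G)=\max_{uv\in E(G)}|x_u-x_v|$, and $\gamma(G)=\min_{x\in\mathcal{F}}\gamma_x(G)$. For a connected graph, $d(u,v)$ is shortest-path distance, $\operatorname{tr}(u)=\sum_v d(u,v)$, and $W(G)=\sum_{\{u,v\}}d(u,v)=\frac12\sum_u\operatorname{tr}(u)$ (sum over unordered pairs). $G$ is transmission-regular if all vertices have the same transmission. *)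

theory Defs
  imports Main Complex_Main
begin

text \<open>A finite simple undirected graph: vertex set is the (finite) universe of
the type 'a, edges given by a symmetric irreflexive relation E.\<close>

definition simple_graph :: "('a \<Rightarrow> 'a \<Rightarrow> bool) \<Rightarrow> bool" where
  "simple_graph E \<longleftrightarrow> (\<forall>u v. E u v \<longrightarrow> E v u) \<and> (\<forall>u. \<not> E u u)"

definition connected_graph :: "('a \<Rightarrow> 'a \<Rightarrow> bool) \<Rightarrow> bool" where
  "connected_graph E \<longleftrightarrow> (\<forall>u v. \<exists>k. (E ^^ k) u v)"

text \<open>Shortest-path distance (length of a shortest walk = shortest path).\<close>
definition gdist :: "('a \<Rightarrow> 'a \<Rightarrow> bool) \<Rightarrow> 'a \<Rightarrow> 'a \<Rightarrow> nat" where
  "gdist E u v = (LEAST k. (E ^^ k) u v)"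

definition transmission :: "('a::finite \<Rightarrow> 'a \<Rightarrow> bool) \<Rightarrow> 'a \<Rightarrow> nat" where
  "transmission E u = (\<Sum>v\<in>UNIV. gdist E u v)"

text \<open>Wiener index: sum of distances over unordered pairs = half the sum of transmissions.\<close>
definition wiener :: "('a::finite \<Rightarrow> 'a \<Rightarrow> bool) \<Rightarrow> real" where
  "wiener E = (\<Sum>u\<in>UNIV. real (transmission E u)) / 2"

definition transmission_regular :: "('a::finite \<Rightarrow> 'a \<Rightarrow> bool) \<Rightarrow> bool" where
  "transmission_regular E \<longleftrightarrow> (\<forall>u v. transmission E u = transmission E v)"

definition sup_norm :: "('a::finite \<Rightarrow> real) \<Rightarrow> real" where
  "sup_norm x = Max (range (\<lambda>v. \<bar>x v\<bar>))"

definition feasible :: "('a::finite \<Rightarrow> real) set" where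
  "feasible = {x. (\<Sum>v\<in>UNIV. x v) = 0 \<and> sup_norm x = 1}"

definition gamma_x :: "('a::finite \<Rightarrow> 'a \<Rightarrow> bool) \<Rightarrow> ('a \<Rightarrow> real) \<Rightarrow> real" where
  "gamma_x E x = Max {\<bar>x u - x v\<bar> | u v. E u v}"

text \<open>gamma(G) = min over the feasible set; the minimum is attained (compactness),
so it coincides with the infimum used here.\<close>
definition gamma :: "('a::finite \<Rightarrow> 'a \<Rightarrow> bool) \<Rightarrow> real" where
  "gamma E = Inf (gamma_x E ` feasible)"

end

theory Submission
  imports Defs
begin

lemma gd_walk:
  assumes "connected_graph E"
  shows "(E ^^ gdist E u v) u v"
  using assms unfolding connected_graph_def gdist_def by (metis LeastI_ex)

lemma gd_le:
  assumes "(E ^^ k) u v"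
  shows "gdist E u v \<le> k"
  using assms unfolding gdist_def by (rule Least_le)

lemma gd_self: "gdist E u u = 0"
  using gd_le[where E=E and k=0 and u=u and v=u] by simp

lemma gd_pos:
  assumes "connected_graph E" "u \<noteq> v"
  shows "gdist E u v \<ge> 1"
proof (rule ccontr)
  assume "\<not> ?thesis"
  then have "gdist E u v = 0" by simp
  with gd_walk[OF assms(1), of u v] assms(2) show False by simp
qed

lemma gd_edge:
  assumes "connected_graph E" "E u v"
  shows "gdist E w v \<le> gdist E w u + 1"
proof -
  have "(E ^^ Suc (gdist E w u)) w v"
    using relpowp_Suc_I[OF gd_walk[OF assms(1)] assms(2)] .
  then show ?thesis using gd_le by fastforce
qed

lemma gd_edge_abs:
  assumes "simple_graph E" "connected_graph E" "E u v"
  shows "\<bar>real (gdist E w u) - real (gdist E w v)\<bar> \<le> 1"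
proof -
  have "E v u" using assms(1,3) unfolding simple_graph_def by blast
  then show ?thesis using gd_edge[OF assms(2,3), of w] gd_edge[OF assms(2) \<open>E v u\<close>, of w]
    by linarith
qed

lemma walk_bound:
  assumes "(E ^^ k) u v" "\<And>a b. E a b \<Longrightarrow> \<bar>x a - x b\<bar> \<le> (g::real)"
  shows "\<bar>x u - x v\<bar> \<le> real k * g"
  using assms(1)
proof (induction k arbitrary: v)
  case 0
  then show ?case by simp
next
  case (Suc k)
  from Suc.prems obtain y where y: "(E ^^ k) u y" "E y v" by (rule relpowp_Suc_E)
  have "\<bar>x u - x v\<bar> \<le> \<bar>x u - x y\<bar> + \<bar>x y - x v\<bar>" by linarith
  also have "\<dots> \<le> real k * g + g" using Suc.IH[OF y(1)] assms(2)[OF y(2)] by linarith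
  finally show ?case by (simp add: algebra_simps)
qed

lemma sup_norm_attained:
  fixes x :: "'a::finite \<Rightarrow> real"
  shows "\<exists>v. \<bar>x v\<bar> = sup_norm x" and "\<And>v. \<bar>x v\<bar> \<le> sup_norm x"
proof -
  have "sup_norm x \<in> range (\<lambda>v. \<bar>x v\<bar>)" unfolding sup_norm_def
    by (rule Max_in) auto
  then show "\<exists>v. \<bar>x v\<bar> = sup_norm x" by auto
  show "\<And>v. \<bar>x v\<bar> \<le> sup_norm x" unfolding sup_norm_def by (rule Max_ge) auto
qed

lemma sup_norm_eqI:
  fixes x :: "'a::finite \<Rightarrow> real"
  assumes "\<And>v. \<bar>x v\<bar> \<le> c" "\<bar>x v0\<bar> = c"
  shows "sup_norm x = c"
  unfolding sup_norm_def
  by (rule Max_eqI) (use assms in auto)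

lemma edge_set_finite: "finite {\<bar>x u - x v\<bar> | u v. E u v}" for x :: "'a::finite \<Rightarrow> real"
proof -
  have "{\<bar>x u - x v\<bar> | u v. E u v} \<subseteq> (\<lambda>(u,v). \<bar>x u - x v\<bar>) ` UNIV" by auto
  then show ?thesis by (rule finite_subset) auto
qed

lemma gamma_x_ge:
  fixes x :: "'a::finite \<Rightarrow> real"
  assumes "E u v"
  shows "\<bar>x u - x v\<bar> \<le> gamma_x E x"
  unfolding gamma_x_def by (rule Max_ge[OF edge_set_finite]) (use assms in blast)

lemma gamma_x_le:
  fixes x :: "'a::finite \<Rightarrow> real"
  assumes "E a b" "\<And>u v. E u v \<Longrightarrow> \<bar>x u - x v\<bar> \<le> c"
  shows "gamma_x E x \<le> c"
  unfolding gamma_x_def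
  using assms by (subst Max_le_iff[OF edge_set_finite]) auto

lemma div_le_self_aux:
  fixes a M :: real
  assumes "a \<ge> 0" "M \<ge> 1"
  shows "a / M \<le> a"
  using divide_left_mono[of 1 M a] assms by simp

theorem theorem4p2:
  fixes E :: "'a::finite \<Rightarrow> 'a \<Rightarrow> bool"
  assumes "simple_graph E" and "connected_graph E" and "card (UNIV :: 'a set) \<ge> 2"
  shows "gamma E \<le> real (card (UNIV :: 'a set))^2 / (2 * wiener E)
    \<and> (gamma E = real (card (UNIV :: 'a set))^2 / (2 * wiener E) \<longleftrightarrow> transmission_regular E)"
proof -
  define n where "n = real (card (UNIV :: 'a set))"
  define tr where "tr = (\<lambda>w. real (transmission E w))"
  define S where "S = (\<Sum>w\<in>UNIV. tr w)"
  have n2: "n \<ge> 2" using assms(3) unfolding n_def by simp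
  have trsum: "tr w = (\<Sum>v\<in>UNIV. real (gdist E w v))" for w
    unfolding tr_def transmission_def by simp
  have ex2: "\<exists>v. v \<noteq> w" for w :: 'a
  proof (rule ccontr)
    assume "\<not> ?thesis"
    then have "(UNIV :: 'a set) = {w}" by auto
    then have "card (UNIV :: 'a set) = 1" by (metis card.empty card_insert_disjoint empty_iff finite.emptyI One_nat_def)
    then show False using assms(3) by simp
  qed
  have trpos: "tr w > 0" for w
  proof -
    obtain v where "v \<noteq> w" using ex2 by blast
    then have "real (gdist E w v) \<ge> 1" using gd_pos[OF assms(2)] by fastforce
    moreover have "real (gdist E w v) \<le> (\<Sum>v\<in>UNIV. real (gdist E w v))"
      by (rule member_le_sum) auto
    ultimately show ?thesis using trsum by simp
  qed
  obtain a b where ab: "E a b"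
  proof -
    define a0 :: 'a where "a0 = undefined"
    obtain b where "b \<noteq> a0" using ex2 by blast
    have w: "(E ^^ gdist E a0 b) a0 b" by (rule gd_walk[OF assms(2)])
    have "gdist E a0 b \<ge> 1" using gd_pos[OF assms(2)] \<open>b \<noteq> a0\<close> by auto
    then obtain k where "gdist E a0 b = Suc k" by (cases "gdist E a0 b") auto
    with w have "(E ^^ Suc k) a0 b" by simp
    then show ?thesis using that by (metis relpowp_Suc_D2)
  qed
  have gx_nonneg: "gamma_x E x \<ge> 0" for x :: "'a \<Rightarrow> real"
    using gamma_x_ge[where E=E and u=a and v=b and x=x] ab by linarith
  have bdd: "bdd_below (gamma_x E ` feasible)"
    using gx_nonneg by (intro bdd_belowI[of _ 0]) auto
  have keyA: "gamma E * tr w \<le> n \<and> (feasible :: ('a \<Rightarrow> real) set) \<noteq> {}" for w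
  proof -
    define \<alpha> where "\<alpha> = n / tr w"
    have apos: "\<alpha> > 0" using trpos[of w] n2 unfolding \<alpha>_def by simp
    define x where "x = (\<lambda>v. 1 - \<alpha> * real (gdist E w v))"
    define M where "M = sup_norm x"
    have xw: "x w = 1" unfolding x_def by (simp add: gd_self)
    have M1: "M \<ge> 1" using sup_norm_attained(2)[of x w] xw unfolding M_def by simp
    obtain v0 where v0: "\<bar>x v0\<bar> = M" using sup_norm_attained(1)[of x] unfolding M_def by blast
    define y where "y = (\<lambda>v. x v / M)"
    have sx: "(\<Sum>v\<in>UNIV. x v) = 0"
    proof -
      have "(\<Sum>v\<in>UNIV. x v) = n - \<alpha> * tr w"
        unfolding x_def trsum n_def by (simp add: sum_subtractf sum_distrib_left)
      also have "\<dots> = 0" unfolding \<alpha>_def using trpos[of w] by simp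
      finally show ?thesis .
    qed
    have Mpos: "M > 0" using M1 by simp
    have yabs: "\<bar>y v\<bar> = \<bar>x v\<bar> / M" for v
      unfolding y_def using Mpos by (simp add: abs_divide)
    have "(\<Sum>v\<in>UNIV. y v) = (\<Sum>v\<in>UNIV. x v) / M"
      unfolding y_def by (rule sum_divide_distrib[symmetric])
    then have sy: "(\<Sum>v\<in>UNIV. y v) = 0" using sx by simp
    have ny: "sup_norm y = 1"
    proof (rule sup_norm_eqI[of y 1 v0])
      fix v
      have "\<bar>x v\<bar> \<le> M" using sup_norm_attained(2)[of x v] unfolding M_def .
      then show "\<bar>y v\<bar> \<le> 1" unfolding yabs using Mpos by simp
    next
      show "\<bar>y v0\<bar> = 1" unfolding yabs using v0 Mpos by simp
    qed
    have yf: "y \<in> feasible" unfolding feasible_def using sy ny by simp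
    have "gamma_x E y \<le> \<alpha>"
    proof (rule gamma_x_le[where E=E and a=a and b=b, OF ab])
      fix u v assume "E u v"
      have "y u - y v = (x u - x v) / M" unfolding y_def by (rule diff_divide_distrib[symmetric])
      then have yx: "\<bar>y u - y v\<bar> = \<bar>x u - x v\<bar> / M" using Mpos by (simp add: abs_divide)
      have "x u - x v = \<alpha> * (real (gdist E w v) - real (gdist E w u))"
        unfolding x_def by (simp add: algebra_simps)
      then have xx: "\<bar>x u - x v\<bar> = \<alpha> * \<bar>real (gdist E w u) - real (gdist E w v)\<bar>"
        using apos by (simp add: abs_mult abs_minus_commute)
      have "\<alpha> * \<bar>real (gdist E w u) - real (gdist E w v)\<bar> \<le> \<alpha> * 1"
        using gd_edge_abs[OF assms(1,2) \<open>E u v\<close>, of w] apos by (intro mult_left_mono) auto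
      then have "\<bar>x u - x v\<bar> \<le> \<alpha>" using xx by simp
      moreover have "\<bar>x u - x v\<bar> / M \<le> \<bar>x u - x v\<bar>" using M1 by (intro div_le_self_aux) auto
      ultimately show "\<bar>y u - y v\<bar> \<le> \<alpha>" using yx by linarith
    qed
    then have "gamma E \<le> \<alpha>" unfolding gamma_def
      using cInf_lower[OF imageI[OF yf] bdd] by linarith
    then have "gamma E * tr w \<le> \<alpha> * tr w" using trpos[of w] by (simp add: mult_right_mono)
    also have "\<alpha> * tr w = n" unfolding \<alpha>_def using trpos[of w] by simp
    finally show ?thesis using yf by blast
  qed
  have keyB: "\<exists>u. n \<le> tr u * gamma_x E x" if xf: "x \<in> feasible" for x
  proof -
    from xf have sx: "(\<Sum>v\<in>UNIV. x v) = 0" and nx: "sup_norm x = 1" unfolding feasible_def by auto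
    obtain u where u: "\<bar>x u\<bar> = 1" using sup_norm_attained(1)[of x] nx by auto
    have "n = \<bar>\<Sum>v\<in>UNIV. (x u - x v)\<bar>"
      using sx u unfolding n_def by (simp add: sum_subtractf abs_mult)
    also have "\<dots> \<le> (\<Sum>v\<in>UNIV. \<bar>x u - x v\<bar>)" by (rule sum_abs)
    also have "\<dots> \<le> (\<Sum>v\<in>UNIV. real (gdist E u v) * gamma_x E x)"
      by (rule sum_mono, rule walk_bound[where x=x and g="gamma_x E x", OF gd_walk[OF assms(2)]], erule gamma_x_ge)
    also have "\<dots> = tr u * gamma_x E x" unfolding trsum by (simp add: sum_distrib_right)
    finally show ?thesis by blast
  qed
  have W: "real (card (UNIV :: 'a set))^2 / (2 * wiener E) = n * n / S"
    unfolding wiener_def S_def tr_def n_def by (simp add: power2_eq_square)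
  have Spos: "S > 0" unfolding S_def using trpos by (intro sum_pos) auto
  have A1: "gamma E * S \<le> n * n"
  proof -
    have "gamma E * S = (\<Sum>w\<in>UNIV. gamma E * tr w)" unfolding S_def by (simp add: sum_distrib_left)
    also have "\<dots> \<le> (\<Sum>w\<in>(UNIV::'a set). n)" using keyA by (intro sum_mono) simp
    also have "\<dots> = n * n" unfolding n_def by simp
    finally show ?thesis .
  qed
  have part1: "gamma E \<le> n * n / S" using A1 Spos by (simp add: le_divide_eq)
  have part2: "gamma E = n * n / S \<longleftrightarrow> transmission_regular E"
  proof
    assume eq: "gamma E = n * n / S"
    have "(\<Sum>w\<in>UNIV. n - gamma E * tr w) = n * n - gamma E * S"
      unfolding S_def n_def by (simp add: sum_subtractf sum_distrib_left)
    also have "\<dots> = 0" using eq Spos by simp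
    finally have "\<forall>w\<in>UNIV. n - gamma E * tr w = 0"
      using keyA by (subst sum_nonneg_eq_0_iff[symmetric]) auto
    then have tw: "gamma E * tr w = n" for w by auto
    have "gamma E \<noteq> 0" using tw[of a] n2 by auto
    then have "tr w = n / gamma E" for w using tw[of w] by (simp add: field_simps)
    then show "transmission_regular E" unfolding transmission_regular_def tr_def
      by (metis of_nat_eq_iff)
  next
    assume reg: "transmission_regular E"
    define t where "t = tr a"
    have tt: "tr w = t" for w using reg unfolding transmission_regular_def tr_def t_def by simp
    have St: "S = n * t" unfolding S_def tt n_def by simp
    have tpos: "t > 0" using trpos[of a] t_def by simp
    have "n / t \<le> gamma E" unfolding gamma_def
    proof (rule cInf_greatest)
      show "gamma_x E ` feasible \<noteq> {}" using keyA by auto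
    next
      fix g assume "g \<in> gamma_x E ` feasible"
      then obtain x where "x \<in> feasible" "g = gamma_x E x" by auto
      then obtain u where "n \<le> tr u * g" using keyB by blast
      then show "n / t \<le> g" using tt[of u] tpos by (simp add: divide_le_eq mult.commute)
    qed
    moreover have "n * n / S = n / t" using St n2 by simp
    ultimately show "gamma E = n * n / S" using part1 by linarith
  qed
  show ?thesis using part1 part2 W by simp
qed

end
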